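(* Let $(\Omega,d)$ be a compact Hadamard space, let $n\ge1$, and fix $Y_1,\dots,Y_n\in\Omega$. Let $\Delta^{n-1}=\{w\in\mathbb{R}^n: w_i\ge0,\ \sum_i w_i=1\}$ and, for $w\in\Delta^{n-1}$, let $\mu(w)=\operatorname{argmin}_{y\in\Omega}\sum_{i=1}^n w_i d^2(y,Y_i)$ be the weighted Fréchet mean (which exists and is unique in a Hadamard space). Let $D=\sup_{u,v\in\Omega}d(u,v)$. Then for all $w_1,w_2\in\Delta^{n-1}$, \[d(\mu(w_1),\mu(w_2))\le D\sqrt{n}\,\|w_1-w_2\|_2.\]
   Context: A metric space $(\Omega,d)$ is a Hadamard space if it is complete and for every $\omega_1,\omega_2\in\Omega$ there exists $\alpha\in\Omega$ such that $d^2(\beta,\alpha)\le \tfrac12 d^2(\beta,\omega_1)+\tfrac12 d^2(\beta,\omega_2)-\tfrac14 d^2(\omega_1,\omega_2)$ for all $\beta\in\Omega$. $\|\cdot\|_2$ is the Euclidean norm on $\mathbb{R}^n$. *)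

theory Defs
  imports "HOL-Analysis.Analysis"
begin

text \<open>Hadamard space: complete metric space with the midpoint (CAT(0)) inequality,
  as in the paper. The whole type plays the role of \<Omega>.\<close>
definition hadamard_space :: "'a::metric_space itself \<Rightarrow> bool" where
  "hadamard_space _ \<longleftrightarrow> complete (UNIV :: 'a set) \<and>
     (\<forall>\<omega>1 \<omega>2 :: 'a. \<exists>\<alpha>. \<forall>\<beta>.
        (dist \<beta> \<alpha>)\<^sup>2 \<le> (1/2) * (dist \<beta> \<omega>1)\<^sup>2 + (1/2) * (dist \<beta> \<omega>2)\<^sup>2
                          - (1/4) * (dist \<omega>1 \<omega>2)\<^sup>2)"

definition prob_simplex :: "(real ^ 'n) set" where
  "prob_simplex = {w. (\<forall>i. 0 \<le> w $ i) \<and> (\<Sum>i\<in>UNIV. w $ i) = 1}"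

definition frechet_mean :: "real ^ 'n \<Rightarrow> ('n \<Rightarrow> 'a::metric_space) \<Rightarrow> 'a" where
  "frechet_mean w Y = (THE y. \<forall>z. (\<Sum>i\<in>UNIV. w $ i * (dist y (Y i))\<^sup>2)
                                 \<le> (\<Sum>i\<in>UNIV. w $ i * (dist z (Y i))\<^sup>2))"

end

theory Submission
  imports Defs
begin

definition FF :: "real ^ 'n \<Rightarrow> ('n::finite \<Rightarrow> 'a::metric_space) \<Rightarrow> 'a \<Rightarrow> real" where
  "FF w Y y = (\<Sum>i\<in>UNIV. w $ i * (dist y (Y i))\<^sup>2)"

lemma FF_mid:
  fixes Y :: "'n::finite \<Rightarrow> 'a::metric_space"
  assumes H: "hadamard_space TYPE('a)" and w: "w \<in> prob_simplex"
  shows "\<exists>c. FF w Y c \<le> FF w Y a / 2 + FF w Y b / 2 - (dist a b)\<^sup>2 / 4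
          \<and> dist a c = dist a b / 2"
proof -
  obtain c where c: "\<And>\<beta>. (dist \<beta> c)\<^sup>2 \<le> (1/2) * (dist \<beta> a)\<^sup>2 + (1/2) * (dist \<beta> b)\<^sup>2
                          - (1/4) * (dist a b)\<^sup>2"
    using H unfolding hadamard_space_def by blast
  have w0: "\<And>i. 0 \<le> w $ i" and w1: "(\<Sum>i\<in>UNIV. w $ i) = 1"
    using w unfolding prob_simplex_def by auto
  have "FF w Y c \<le> (\<Sum>i\<in>UNIV. w $ i * ((1/2) * (dist (Y i) a)\<^sup>2 + (1/2) * (dist (Y i) b)\<^sup>2
                          - (1/4) * (dist a b)\<^sup>2))"
    unfolding FF_def
    by (rule sum_mono, rule mult_left_mono) (use c w0 in \<open>auto simp: dist_commute[of _ "Y _"]\<close>)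
  also have "\<dots> = FF w Y a / 2 + FF w Y b / 2 - (dist a b)\<^sup>2 / 4 * (\<Sum>i\<in>UNIV. w $ i)"
    unfolding FF_def by (simp add: algebra_simps sum.distrib sum_subtractf sum_distrib_left
        sum_divide_distrib sum_distrib_right dist_commute)
  finally have 1: "FF w Y c \<le> FF w Y a / 2 + FF w Y b / 2 - (dist a b)\<^sup>2 / 4" using w1 by simp
  have ca: "(dist a c)\<^sup>2 \<le> (dist a b / 2)\<^sup>2" using c[of a] by (simp add: power_divide)
  have cb: "(dist b c)\<^sup>2 \<le> (dist a b / 2)\<^sup>2" using c[of b] by (simp add: power_divide dist_commute)
  have "dist a c \<le> dist a b / 2" using ca by (simp add: power2_le_iff_abs_le)
  moreover have "dist b c \<le> dist a b / 2" using cb by (simp add: power2_le_iff_abs_le)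
  moreover have "dist a b \<le> dist a c + dist b c" by (simp add: dist_triangle2)
  ultimately have "dist a c = dist a b / 2" by linarith
  with 1 show ?thesis by blast
qed


lemma FF_variance:
  fixes Y :: "'n::finite \<Rightarrow> 'a::metric_space"
  assumes H: "hadamard_space TYPE('a)" and w: "w \<in> prob_simplex"
    and m: "\<And>z. FF w Y m \<le> FF w Y z"
  shows "FF w Y m + (dist m z)\<^sup>2 \<le> FF w Y z"
proof -
  define G where "G x = FF w Y x - FF w Y m" for x
  define d where "d = dist m z"
  have G0: "\<And>x. 0 \<le> G x" using m by (simp add: G_def)
  have step: "\<exists>a. dist m a = (1/2)^k * d \<and> G a \<le> (1/2)^k * G z - (1/2)^k * (1 - (1/2)^k) * d\<^sup>2" for k
  proof (induction k)
    case 0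
    then show ?case by (intro exI[of _ z]) (simp add: d_def)
  next
    case (Suc k)
    then obtain a where a1: "dist m a = (1/2)^k * d"
      and a2: "G a \<le> (1/2)^k * G z - (1/2)^k * (1 - (1/2)^k) * d\<^sup>2" by blast
    obtain c where c1: "FF w Y c \<le> FF w Y m / 2 + FF w Y a / 2 - (dist m a)\<^sup>2 / 4"
      and c2: "dist m c = dist m a / 2" using FF_mid[OF H w, of Y m a] by blast
    define t :: real where "t = (1/2)^k"
    have "(dist m a)\<^sup>2 = (t * d)\<^sup>2" using a1 t_def by simp
    then have c3: "G c \<le> G a / 2 - (t * d)\<^sup>2 / 4" using c1 unfolding G_def by (simp add: field_simps)
    have "G c \<le> (t/2) * G z - (t/2) * (1 - t/2) * d\<^sup>2"
      using c3 a2 unfolding t_def[symmetric] by (simp add: power2_eq_square algebra_simps)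
    moreover have "dist m c = (t/2) * d" using c2 a1 t_def by simp
    ultimately show ?case unfolding t_def by (intro exI[of _ c]) simp
  qed
  have le: "(1 - (1/2)^k) * d\<^sup>2 \<le> G z" for k
  proof -
    obtain a where "G a \<le> (1/2)^k * G z - (1/2)^k * (1 - (1/2)^k) * d\<^sup>2" using step by blast
    with G0[of a] have "(1/2::real)^k * ((1 - (1/2)^k) * d\<^sup>2) \<le> (1/2)^k * G z"
      by (simp add: algebra_simps)
    then show ?thesis by (rule mult_left_le_imp_le) simp
  qed
  have "d\<^sup>2 \<le> G z"
  proof (rule ccontr)
    assume "\<not> d\<^sup>2 \<le> G z"
    then have pos: "0 < d\<^sup>2 - G z" and dpos: "0 < d\<^sup>2" using G0[of z] by auto
    obtain k where k: "(1/2::real)^k < (d\<^sup>2 - G z) / d\<^sup>2"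
      using real_arch_pow_inv[of "(d\<^sup>2 - G z) / d\<^sup>2" "1/2"] pos dpos by auto
    have "(1/2::real)^k * d\<^sup>2 < d\<^sup>2 - G z" using k dpos by (simp add: pos_less_divide_eq)
    with le[of k] show False by (simp add: algebra_simps)
  qed
  then show ?thesis unfolding G_def d_def by simp
qed


lemma FF_mean:
  fixes Y :: "'n::finite \<Rightarrow> 'a::metric_space"
  assumes H: "hadamard_space TYPE('a)" and C: "compact (UNIV :: 'a set)"
    and w: "w \<in> prob_simplex"
  shows "\<forall>z. FF w Y (frechet_mean w Y) \<le> FF w Y z"
proof -
  have "continuous_on UNIV (FF w Y)" unfolding FF_def by (intro continuous_intros)
  then obtain m where m: "\<And>z. FF w Y m \<le> FF w Y z"
    using continuous_attains_inf[OF C] by blast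
  have "frechet_mean w Y = m"
    unfolding frechet_mean_def FF_def[symmetric]
  proof (rule the_equality)
    show "\<forall>z. FF w Y m \<le> FF w Y z" using m by blast
  next
    fix y assume y: "\<forall>z. FF w Y y \<le> FF w Y z"
    have "FF w Y y + (dist y m)\<^sup>2 \<le> FF w Y m" using FF_variance[OF H w] y by blast
    with m[of y] have "(dist y m)\<^sup>2 \<le> 0" by linarith
    then show "y = m" by simp
  qed
  then show ?thesis using m by simp
qed

lemma sum_abs_le_norm:
  fixes v :: "real ^ 'n::finite"
  shows "(\<Sum>i\<in>UNIV. \<bar>v $ i\<bar>) \<le> sqrt (real CARD('n)) * norm v"
proof -
  have "(\<Sum>i\<in>UNIV. \<bar>v $ i\<bar>) = (\<Sum>i\<in>UNIV. \<bar>(\<lambda>_. 1::real) i\<bar> * \<bar>(\<lambda>i. norm (v $ i)) i\<bar>)" by simp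
  also have "\<dots> \<le> L2_set (\<lambda>_::'n. 1::real) UNIV * L2_set (\<lambda>i. norm (v $ i)) UNIV"
    using L2_set_mult_ineq[of "\<lambda>_::'n. 1::real" "\<lambda>i. norm (v $ i)" UNIV] by simp
  also have "\<dots> = sqrt (real CARD('n)) * norm v"
    by (simp add: L2_set_constant norm_vec_def)
  finally show ?thesis .
qed

theorem lemma4p3:
  fixes Y :: "'n::finite \<Rightarrow> 'a::metric_space"
    and w1 w2 :: "real ^ 'n"
  assumes "hadamard_space TYPE('a)"
    and "compact (UNIV :: 'a set)"
    and "w1 \<in> prob_simplex" and "w2 \<in> prob_simplex"
  shows "dist (frechet_mean w1 Y) (frechet_mean w2 Y)
           \<le> (SUP p\<in>(UNIV :: ('a \<times> 'a) set). dist (fst p) (snd p))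
              * sqrt (real CARD('n)) * norm (w1 - w2)"
proof -
  define D where "D = (SUP p\<in>(UNIV :: ('a \<times> 'a) set). dist (fst p) (snd p))"
  define m1 where "m1 = frechet_mean w1 Y"
  define m2 where "m2 = frechet_mean w2 Y"
  define d where "d = dist m1 m2"
  have "bounded (UNIV :: 'a set)" using assms(2) by (rule compact_imp_bounded)
  then obtain e where e: "\<And>x y::'a. dist x y \<le> e" unfolding bounded_two_points by blast
  have bdd: "bdd_above ((\<lambda>p. dist (fst p) (snd p)) ` (UNIV :: ('a \<times> 'a) set))"
    using e by (auto intro!: bdd_aboveI)
  have Dle: "dist x y \<le> D" for x y :: 'a
    unfolding D_def using cSUP_upper[OF _ bdd, of "(x,y)"] by simp
  have D0: "0 \<le> D" using Dle[of m1 m1] by simp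
  have v1: "FF w1 Y m1 + d\<^sup>2 \<le> FF w1 Y m2"
    using FF_variance[OF assms(1,3)] FF_mean[OF assms(1,2,3)] unfolding m1_def d_def by blast
  have v2: "FF w2 Y m2 + d\<^sup>2 \<le> FF w2 Y m1"
    using FF_variance[OF assms(1,4)] FF_mean[OF assms(1,2,4)] unfolding m2_def d_def
    by (metis dist_commute)
  have "2 * d\<^sup>2 \<le> (FF w1 Y m2 - FF w1 Y m1) + (FF w2 Y m1 - FF w2 Y m2)" using v1 v2 by simp
  also have "\<dots> = (\<Sum>i\<in>UNIV. (w1 $ i - w2 $ i) * ((dist m2 (Y i))\<^sup>2 - (dist m1 (Y i))\<^sup>2))"
    unfolding FF_def by (simp add: algebra_simps sum_subtractf sum.distrib)
  also have "\<dots> \<le> (\<Sum>i\<in>UNIV. \<bar>(w1 - w2) $ i\<bar> * (2 * D * d))"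
  proof (rule sum_mono)
    fix i
    have t1: "\<bar>dist m2 (Y i) - dist m1 (Y i)\<bar> \<le> d"
      unfolding d_def using dist_triangle2[of m1 "Y i" m2] dist_triangle2[of m2 "Y i" m1]
      by (simp add: dist_commute abs_le_iff)
    have t2: "dist m2 (Y i) + dist m1 (Y i) \<le> 2 * D" using Dle[of m2 "Y i"] Dle[of m1 "Y i"] by simp
    have "\<bar>(dist m2 (Y i))\<^sup>2 - (dist m1 (Y i))\<^sup>2\<bar>
        = \<bar>dist m2 (Y i) - dist m1 (Y i)\<bar> * (dist m2 (Y i) + dist m1 (Y i))"
    proof -
      have "(dist m2 (Y i))\<^sup>2 - (dist m1 (Y i))\<^sup>2 = (dist m2 (Y i) - dist m1 (Y i)) * (dist m2 (Y i) + dist m1 (Y i))"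
        by (simp add: power2_eq_square algebra_simps)
      then show ?thesis by (simp add: abs_mult)
    qed
    also have "\<dots> \<le> d * (2 * D)"
      by (rule mult_mono) (use t1 t2 in auto)
    also have "d * (2 * D) = 2 * D * d" by simp
    finally have "\<bar>(dist m2 (Y i))\<^sup>2 - (dist m1 (Y i))\<^sup>2\<bar> \<le> 2 * D * d" .
    then have "\<bar>(w1 $ i - w2 $ i) * ((dist m2 (Y i))\<^sup>2 - (dist m1 (Y i))\<^sup>2)\<bar> \<le> \<bar>(w1 - w2) $ i\<bar> * (2 * D * d)"
      by (simp add: abs_mult mult_left_mono)
    then show "(w1 $ i - w2 $ i) * ((dist m2 (Y i))\<^sup>2 - (dist m1 (Y i))\<^sup>2) \<le> \<bar>(w1 - w2) $ i\<bar> * (2 * D * d)"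
      by linarith
  qed
  also have "\<dots> = (\<Sum>i\<in>UNIV. \<bar>(w1 - w2) $ i\<bar>) * (2 * D * d)" by (simp add: sum_distrib_right)
  also have "\<dots> \<le> sqrt (real CARD('n)) * norm (w1 - w2) * (2 * D * d)"
    by (rule mult_right_mono[OF sum_abs_le_norm]) (simp add: D0 d_def)
  finally have main: "d * d \<le> d * (D * sqrt (real CARD('n)) * norm (w1 - w2))"
    by (simp add: power2_eq_square algebra_simps)
  have "d \<le> D * sqrt (real CARD('n)) * norm (w1 - w2)"
  proof (cases "d = 0")
    case True then show ?thesis using D0 by simp
  next
    case False then have "0 < d" unfolding d_def by simp
    then show ?thesis using main by (simp add: mult_le_cancel_left)
  qed
  then show ?thesis unfolding d_def m1_def m2_def D_def .
qed

end
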